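(* Let $M$ be a matroid on ground set $E$ and let $<$ be a pinned broken line shelling of $\mathcal{I}(M)$ whose first basis is $B$. For each non-loop element $i\in E\setminus B$, let $B_i$ be the basis whose restriction set with respect to $<$ is $\{i\}$. Let $I$ be an independent set of $M$ disjoint from $B$. Then for every $j\ge0$, the number of bases $B'$ whose restriction set has $|I|+j$ elements and such that the atoms of $\mathrm{Int}_<(M)$ below $B'$ are exactly the bases $\{B_i : i\in I\}$ is $h_j((M/I)|_B)$. If $\mathrm{Int}_<(M)$ is ranked, then the cardinality of the restriction sets may be replaced by the rank in $\mathrm{Int}_<(M)$.
   Context: Linear functionals $\ell\in(\mathbb{R}^E)^*$ are identified with functions $E\to\mathbb{R}$, and $\ell(B)=\sum_{b\in B}\ell(b)$. A broken line shelling is an ordering $B_1<\dots<B_n$ of all bases of $M$ such that for each $i$ there is a linear functional $\ell_i$ (a witness) with $\ell_i(B_j)<\ell_i(B_i)$ iff $j<i$; such an order is a shelling order of the independence complex $\mathcal{I}(M)$. It is pinned if the witnesses can be chosen so that for every $i$, $B_1$ is the basis of smallest $\ell_i$-weight. For a shelling order $F_1<\dots<F_k$ of a pure simplicial complex, the restriction set $\mathcal{R}(F_j)$ is the unique subset of $F_j$ such that the faces of $\langle F_1,\dots,F_j\rangle$ not in $\langle F_1,\dots,F_{j-1}\rangle$ are exactly the subsets of $F_j$ containing $\mathcal{R}(F_j)$. $\mathrm{Int}_<(M)$ is the poset on bases with $B'\preceq B''$ iff $\mathcal{R}(B')\subseteq\mathcal{R}(B'')$; its atoms are the elements covering its minimum.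 A loop is an element in no basis. $M/I$ is the contraction of $M$ by $I$, and $(M/I)|_B$ its restriction to the ground set $B$. For a matroid $N$, $h_j(N)$ is the $j$-th entry of the $h$-vector of its independence complex, where for a $(d-1)$-dimensional complex with $f_{i}$ faces of dimension $i$, $\sum_j h_j x^j=\sum_j f_{j-1}x^j(1-x)^{d-j}$. *)

theory Defs
  imports Main "HOL-Computational_Algebra.Polynomial"
begin

definition matroid :: "'a set \<Rightarrow> 'a set set \<Rightarrow> bool" where
  "matroid E Bs \<longleftrightarrow> finite E \<and> Bs \<noteq> {} \<and> (\<forall>B\<in>Bs. B \<subseteq> E) \<and>
     (\<forall>B1\<in>Bs. \<forall>B2\<in>Bs. \<forall>x\<in>B1 - B2. \<exists>y\<in>B2 - B1. insert y (B1 - {x}) \<in> Bs)"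

definition indep :: "'a set set \<Rightarrow> 'a set \<Rightarrow> bool" where
  "indep Bs X \<longleftrightarrow> (\<exists>B\<in>Bs. X \<subseteq> B)"

definition is_loop :: "'a set \<Rightarrow> 'a set set \<Rightarrow> 'a \<Rightarrow> bool" where
  "is_loop E Bs e \<longleftrightarrow> e \<in> E \<and> (\<forall>B\<in>Bs. e \<notin> B)"

text \<open>Independent sets of the matroid (M/I)|_S, for I independent and S a subset of E - I:
  J is independent in M/I iff J is a subset of E - I and J \<union> I is independent in M.\<close>
definition contract_restrict_indeps :: "'a set \<Rightarrow> 'a set set \<Rightarrow> 'a set \<Rightarrow> 'a set \<Rightarrow> 'a set set" where
  "contract_restrict_indeps E Bs I S = {J. J \<subseteq> S \<and> J \<subseteq> E - I \<and> indep Bs (J \<union> I)}"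

definition hvec :: "'a set set \<Rightarrow> nat \<Rightarrow> int" where
  "hvec F j = (let d = Max (card ` F) in
     coeff (\<Sum>k\<le>d. of_nat (card {X\<in>F. card X = k}) * monom 1 k * [:1, -1:] ^ (d - k)) j)"

definition lweight :: "('a \<Rightarrow> real) \<Rightarrow> 'a set \<Rightarrow> real" where
  "lweight l B = (\<Sum>b\<in>B. l b)"

definition broken_line_shelling :: "'a set set \<Rightarrow> 'a set list \<Rightarrow> bool" where
  "broken_line_shelling Bs L \<longleftrightarrow> distinct L \<and> set L = Bs \<and>
     (\<forall>i<length L. \<exists>l. \<forall>j<length L. lweight l (L!j) < lweight l (L!i) \<longleftrightarrow> j < i)"

definition pinned_broken_line_shelling :: "'a set set \<Rightarrow> 'a set list \<Rightarrow> bool" where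
  "pinned_broken_line_shelling Bs L \<longleftrightarrow> distinct L \<and> set L = Bs \<and> L \<noteq> [] \<and>
     (\<forall>i<length L. \<exists>l. (\<forall>j<length L. lweight l (L!j) < lweight l (L!i) \<longleftrightarrow> j < i) \<and>
        (\<forall>j<length L. j \<noteq> 0 \<longrightarrow> lweight l (L!0) < lweight l (L!j)))"

text \<open>Restriction set of the k-th facet (0-based) of the ordering L of facets.\<close>
definition restr :: "'a set list \<Rightarrow> nat \<Rightarrow> 'a set" where
  "restr L k = (THE R. R \<subseteq> L!k \<and>
     {F. F \<subseteq> L!k \<and> \<not> (\<exists>k'<k. F \<subseteq> L!k')} = {F. R \<subseteq> F \<and> F \<subseteq> L!k})"

section \<open>The poset Int_<(M), on indices 0..<length L\<close>

definition int_le :: "'a set list \<Rightarrow> nat \<Rightarrow> nat \<Rightarrow> bool" where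
  "int_le L a b \<longleftrightarrow> restr L a \<subseteq> restr L b"

definition int_lt :: "'a set list \<Rightarrow> nat \<Rightarrow> nat \<Rightarrow> bool" where
  "int_lt L a b \<longleftrightarrow> int_le L a b \<and> \<not> int_le L b a"

definition int_covers :: "'a set list \<Rightarrow> nat \<Rightarrow> nat \<Rightarrow> bool" where
  "int_covers L a b \<longleftrightarrow> a < length L \<and> b < length L \<and> int_lt L a b \<and>
     \<not> (\<exists>c<length L. int_lt L a c \<and> int_lt L c b)"

definition int_is_min :: "'a set list \<Rightarrow> nat \<Rightarrow> bool" where
  "int_is_min L m \<longleftrightarrow> m < length L \<and> (\<forall>b<length L. int_le L m b)"

definition int_atom :: "'a set list \<Rightarrow> nat \<Rightarrow> bool" where
  "int_atom L a \<longleftrightarrow> (\<exists>m. int_is_min L m \<and> int_covers L m a)"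

definition atoms_below :: "'a set list \<Rightarrow> nat \<Rightarrow> nat set" where
  "atoms_below L b = {a. a < length L \<and> int_atom L a \<and> int_le L a b}"

definition int_rank_fun :: "'a set list \<Rightarrow> (nat \<Rightarrow> nat) \<Rightarrow> bool" where
  "int_rank_fun L \<rho> \<longleftrightarrow> (\<forall>m. int_is_min L m \<longrightarrow> \<rho> m = 0) \<and>
     (\<forall>a b. int_covers L a b \<longrightarrow> \<rho> b = \<rho> a + 1)"

definition int_ranked :: "'a set list \<Rightarrow> bool" where
  "int_ranked L \<longleftrightarrow> (\<exists>m. int_is_min L m) \<and> (\<exists>\<rho>. int_rank_fun L \<rho>)"

end

theory Submission
  imports Defs
begin

locale mat =
  fixes E :: "'a set" and Bs :: "'a set set"
  assumes M: "matroid E Bs"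
begin

lemma finE: "finite E" using M by (simp add: matroid_def)
lemma sub: "X \<in> Bs \<Longrightarrow> X \<subseteq> E" using M by (auto simp: matroid_def)
lemma finB: "X \<in> Bs \<Longrightarrow> finite X" using sub finE finite_subset by blast
lemma ne: "Bs \<noteq> {}" using M by (simp add: matroid_def)
lemma exch: "B1 \<in> Bs \<Longrightarrow> B2 \<in> Bs \<Longrightarrow> x \<in> B1 - B2 \<Longrightarrow> \<exists>y\<in>B2 - B1. insert y (B1 - {x}) \<in> Bs"
  using M unfolding matroid_def by blast
lemma finBs: "finite Bs"
proof -
  have "Bs \<subseteq> Pow E" using sub by blast
  then show ?thesis using finE finite_subset by blast
qed

lemma card_eq_aux: "\<forall>B1 B2. B1 \<in> Bs \<longrightarrow> B2 \<in> Bs \<longrightarrow> card (B1 - B2) = n \<longrightarrow> card B1 = card B2"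
proof (induction n)
  case 0
  show ?case
  proof (intro allI impI)
    fix B1 B2 assume b: "B1 \<in> Bs" "B2 \<in> Bs" "card (B1 - B2) = 0"
    then have s: "B1 \<subseteq> B2" using finB by auto
    moreover have "B2 \<subseteq> B1"
    proof
      fix x assume x: "x \<in> B2" show "x \<in> B1"
      proof (rule ccontr)
        assume "x \<notin> B1"
        then obtain y where "y \<in> B1 - B2" using exch[OF b(2) b(1)] x by blast
        with s show False by blast
      qed
    qed
    ultimately show "card B1 = card B2" by simp
  qed
next
  case (Suc n)
  show ?case
  proof (intro allI impI)
    fix B1 B2 assume b: "B1 \<in> Bs" "B2 \<in> Bs" "card (B1 - B2) = Suc n"
    then obtain x where x: "x \<in> B1 - B2" by (metis card.empty ex_in_conv nat.simps(3))
    obtain y where y: "y \<in> B2 - B1" "insert y (B1 - {x}) \<in> Bs" using exch[OF b(1) b(2) x] by blast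
    let ?B = "insert y (B1 - {x})"
    have "?B - B2 = (B1 - B2) - {x}" using x y by auto
    then have "card (?B - B2) = n" using b(3) x finB[OF b(1)] by simp
    then have "card ?B = card B2" using Suc.IH y(2) b(2) by blast
    moreover have "card ?B = card B1" using x y finB[OF b(1)]
      by (simp add: card_insert_if card_Diff_singleton card_gt_0_iff) (metis Suc_pred card_gt_0_iff empty_iff)
    ultimately show "card B1 = card B2" by simp
  qed
qed

lemma card_eq: "B1 \<in> Bs \<Longrightarrow> B2 \<in> Bs \<Longrightarrow> card B1 = card B2"
  using card_eq_aux by blast

definition rk where "rk = card (SOME B. B \<in> Bs)"

lemma card_basis: "B \<in> Bs \<Longrightarrow> card B = rk"
  unfolding rk_def by (metis card_eq ne some_in_eq)

lemma indep_subset: "indep Bs X \<Longrightarrow> Y \<subseteq> X \<Longrightarrow> indep Bs Y"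
  unfolding indep_def by blast

lemma indep_fin: "indep Bs X \<Longrightarrow> finite X"
  unfolding indep_def using finB finite_subset by blast

lemma indep_card: "indep Bs X \<Longrightarrow> card X \<le> rk"
  unfolding indep_def using finB card_mono card_basis by metis

lemma basis_indep: "X \<in> Bs \<Longrightarrow> indep Bs X"
  unfolding indep_def by blast

lemma indep_card_basis: "indep Bs X \<Longrightarrow> card X = rk \<Longrightarrow> X \<in> Bs"
  unfolding indep_def using finB card_basis card_subset_eq by metis

lemma basis_sub_eq: "X \<in> Bs \<Longrightarrow> Y \<in> Bs \<Longrightarrow> X \<subseteq> Y \<Longrightarrow> X = Y"
  using finB card_basis card_subset_eq by metis

lemma augment:
  assumes X: "indep Bs X" and Y: "indep Bs Y" and c: "card X < card Y"
  shows "\<exists>y\<in>Y - X. indep Bs (insert y X)"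
proof (rule ccontr)
  assume no: "\<not> ?thesis"
  let ?P = "\<lambda>p. fst p \<in> Bs \<and> snd p \<in> Bs \<and> X \<subseteq> fst p \<and> Y \<subseteq> snd p"
  obtain BX BY where "BX \<in> Bs" "X \<subseteq> BX" "BY \<in> Bs" "Y \<subseteq> BY" using X Y unfolding indep_def by blast
  then have P0: "?P (BX,BY)" by simp
  have bnd: "\<forall>p. ?P p \<longrightarrow> card (fst p \<inter> snd p) < Suc (card E)"
  proof (intro allI impI)
    fix p assume "?P p"
    then have "fst p \<inter> snd p \<subseteq> E" using sub by blast
    then have "card (fst p \<inter> snd p) \<le> card E" using card_mono[OF finE] by blast
    then show "card (fst p \<inter> snd p) < Suc (card E)" by simp
  qed
  obtain p where p: "?P p" and pmax: "\<forall>q. ?P q \<longrightarrow> card (fst q \<inter> snd q) \<le> card (fst p \<inter> snd p)"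
    using Lattices_Big.ex_has_greatest_nat[of ?P "(BX,BY)" "\<lambda>p. card (fst p \<inter> snd p)" "Suc (card E)", OF P0 bnd]
    by blast
  obtain A C where pAC: "p = (A, C)" by (cases p)
  have A: "A \<in> Bs" "X \<subseteq> A" and C: "C \<in> Bs" "Y \<subseteq> C" using p pAC by auto
  have mx: "\<And>A' C'. A' \<in> Bs \<Longrightarrow> C' \<in> Bs \<Longrightarrow> X \<subseteq> A' \<Longrightarrow> Y \<subseteq> C' \<Longrightarrow> card (A' \<inter> C') \<le> card (A \<inter> C)"
    using pmax pAC by (metis fst_conv snd_conv)
  have finA: "finite A" and finC: "finite C" using A C finB by auto
  have 1: "(Y - X) \<inter> A = {}"
  proof (rule ccontr)
    assume "(Y - X) \<inter> A \<noteq> {}"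
    then obtain y where "y \<in> Y - X" "y \<in> A" by blast
    then have "indep Bs (insert y X)" using A unfolding indep_def by blast
    with no \<open>y \<in> Y - X\<close> show False by blast
  qed
  have 2: "C \<subseteq> Y \<union> A"
  proof
    fix x assume x: "x \<in> C" show "x \<in> Y \<union> A"
    proof (rule ccontr)
      assume nx: "x \<notin> Y \<union> A"
      obtain z where z: "z \<in> A - C" "insert z (C - {x}) \<in> Bs" using exch[OF C(1) A(1)] x nx by blast
      have "Y \<subseteq> insert z (C - {x})" using C nx by blast
      then have le: "card (A \<inter> insert z (C - {x})) \<le> card (A \<inter> C)" using mx[OF A(1) z(2) A(2)] by blast
      have "A \<inter> insert z (C - {x}) = insert z (A \<inter> C)" using z nx by blast
      then have "card (A \<inter> insert z (C - {x})) = Suc (card (A \<inter> C))" using z finA by simp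
      with le show False by simp
    qed
  qed
  have 3: "A \<subseteq> X \<union> C"
  proof
    fix x assume x: "x \<in> A" show "x \<in> X \<union> C"
    proof (rule ccontr)
      assume nx: "x \<notin> X \<union> C"
      obtain z where z: "z \<in> C - A" "insert z (A - {x}) \<in> Bs" using exch[OF A(1) C(1)] x nx by blast
      have "X \<subseteq> insert z (A - {x})" using A nx by blast
      then have le: "card (insert z (A - {x}) \<inter> C) \<le> card (A \<inter> C)" using mx[OF z(2) C(1) _ C(2)] by blast
      have "insert z (A - {x}) \<inter> C = insert z (A \<inter> C)" using z nx by blast
      then have "card (insert z (A - {x}) \<inter> C) = Suc (card (A \<inter> C))" using z finC by simp
      with le show False by simp
    qed
  qed
  have s1: "Y - X \<subseteq> C - A" using 1 C by blast
  have s2: "A - C \<subseteq> X - Y" using 3 C(2) by blast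
  have "card (C - A) = card (A - C)"
  proof -
    have "card (A - C) = card A - card (A \<inter> C)" using finA by (simp add: card_Diff_subset_Int)
    moreover have "card (C - A) = card C - card (C \<inter> A)" using finC by (simp add: card_Diff_subset_Int)
    moreover have "C \<inter> A = A \<inter> C" by blast
    ultimately show ?thesis using card_eq[OF A(1) C(1)] by simp
  qed
  moreover have "card (Y - X) \<le> card (C - A)" using s1 finC by (simp add: card_mono)
  moreover have "card (A - C) \<le> card (X - Y)" using s2 indep_fin[OF X] by (simp add: card_mono)
  moreover have "card (X - Y) < card (Y - X)"
  proof -
    have fx: "finite X" and fy: "finite Y" using X Y indep_fin by auto
    have "card (X - Y) = card X - card (X \<inter> Y)" using fx by (simp add: card_Diff_subset_Int)
    moreover have "card (Y - X) = card Y - card (X \<inter> Y)"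
    proof -
      have "card (Y - X) = card Y - card (Y \<inter> X)" using fy by (simp add: card_Diff_subset_Int)
      moreover have "Y \<inter> X = X \<inter> Y" by blast
      ultimately show ?thesis by simp
    qed
    moreover have "card (X \<inter> Y) \<le> card X" using fx by (simp add: card_mono)
    ultimately show ?thesis using c by linarith
  qed
  ultimately show False by linarith
qed

lemma extend:
  assumes X: "indep Bs X" and Z: "Z \<in> Bs"
  shows "\<exists>W. W \<subseteq> Z \<and> X \<union> W \<in> Bs"
proof -
  have "\<And>X. indep Bs X \<Longrightarrow> rk - card X = m \<Longrightarrow> \<exists>W. W \<subseteq> Z \<and> X \<union> W \<in> Bs" for m
  proof (induction m)
    case (0 X)
    then have "card X = rk" using indep_card[OF 0(1)] by simp
    then have "X \<in> Bs" using indep_card_basis 0 by blast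
    then show ?case by (intro exI[of _ "{}"]) simp
  next
    case (Suc m X)
    have "card X < card Z" using Suc.prems card_basis[OF Z] by simp
    then obtain y where y: "y \<in> Z - X" "indep Bs (insert y X)"
      using augment[OF Suc.prems(1) basis_indep[OF Z]] by blast
    have "rk - card (insert y X) = m" using Suc.prems y indep_fin[OF Suc.prems(1)] by (simp add: card_insert_if)
    then obtain W where W: "W \<subseteq> Z" "insert y X \<union> W \<in> Bs" using Suc.IH y(2) by blast
    have "X \<union> insert y W = insert y X \<union> W" by blast
    then show ?case using W y by (intro exI[of _ "insert y W"]) auto
  qed
  then show ?thesis using X by blast
qed

lemma rk_pos: "X \<in> Bs \<Longrightarrow> a \<in> X \<Longrightarrow> rk \<ge> 1"
proof -
  assume X: "X \<in> Bs" and a: "a \<in> X"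
  have "card X > 0" using a finB[OF X] card_gt_0_iff by blast
  then show ?thesis using card_basis[OF X] by simp
qed

lemma card_minus1: "X \<in> Bs \<Longrightarrow> a \<in> X \<Longrightarrow> card (X - {a}) = rk - 1"
  using card_basis finB by (simp add: card_Diff_singleton)

lemma card_swap: "X \<in> Bs \<Longrightarrow> a \<in> X \<Longrightarrow> c \<notin> X - {a} \<Longrightarrow> card (insert c (X - {a})) = rk"
proof -
  assume X: "X \<in> Bs" and a: "a \<in> X" and c: "c \<notin> X - {a}"
  have "card (insert c (X - {a})) = Suc (card (X - {a}))" using c finB[OF X] by simp
  moreover have "card (X - {a}) = rk - 1" using card_minus1 X a by blast
  moreover have "rk \<ge> 1" using rk_pos[OF X a] .
  ultimately show ?thesis by simp
qed

lemma sym_exch: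
  assumes A: "A \<in> Bs" and C: "C \<in> Bs" and a: "a \<in> A - C"
  shows "\<exists>c\<in>C - A. insert c (A - {a}) \<in> Bs \<and> insert a (C - {c}) \<in> Bs"
proof (rule ccontr)
  assume no: "\<not> ?thesis"
  define Y where "Y = {c\<in>C. insert a (C - {c}) \<in> Bs}"
  have finA: "finite A" and finC: "finite C" using A C finB by auto
  have cA: "card A = rk" and cC: "card C = rk" using A C card_basis by auto
  have rk1: "rk \<ge> 1" using rk_pos[OF A] a by blast
  have Yi: "\<not> indep Bs (insert a Y)"
  proof
    assume ind: "indep Bs (insert a Y)"
    obtain W where W: "W \<subseteq> C" "insert a Y \<union> W \<in> Bs" using extend[OF ind C] by blast
    define Z where "Z = insert a Y \<union> W"
    have ZB: "Z \<in> Bs" using W Z_def by simp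
    have Zs: "Z \<subseteq> insert a C" using W Y_def Z_def by auto
    have cZ: "card Z = rk" using card_basis ZB by blast
    have "\<not> C \<subseteq> Z"
    proof
      assume "C \<subseteq> Z"
      then have "insert a C \<subseteq> Z" using Z_def by blast
      then have "card (insert a C) \<le> card Z" using finB[OF ZB] card_mono by blast
      moreover have "card (insert a C) = Suc rk" using a finC cC by simp
      ultimately show False using cZ by simp
    qed
    then obtain c where c: "c \<in> C" "c \<notin> Z" by blast
    have sub2: "Z \<subseteq> insert a (C - {c})" using Zs c by blast
    have "card (insert a (C - {c})) = rk" using card_swap[OF C c(1)] a by blast
    then have "Z = insert a (C - {c})" using card_subset_eq[OF _ sub2] finC cZ by simp
    then have "c \<in> Y" using ZB c(1) Y_def by auto
    then show False using c(2) Z_def by blast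
  qed
  define S where "S = (A - {a}) \<union> Y"
  have Aa: "indep Bs (A - {a})" using indep_subset[OF basis_indep[OF A]] by blast
  have cAa: "card (A - {a}) = rk - 1" using card_minus1 A a by blast
  have noS: "\<And>X. X \<subseteq> S \<Longrightarrow> indep Bs X \<Longrightarrow> card X \<noteq> rk"
  proof
    fix X assume X: "X \<subseteq> S" "indep Bs X" "card X = rk"
    have "card (A - {a}) < card X" using cAa X(3) rk1 by simp
    then obtain s where s: "s \<in> X - (A - {a})" "indep Bs (insert s (A - {a}))"
      using augment[OF Aa X(2)] by blast
    then have sY: "s \<in> Y" using X(1) S_def by blast
    then have sC: "s \<in> C" and sa: "s \<noteq> a" using Y_def a by auto
    then have sA: "s \<notin> A" using s by blast
    have "card (insert s (A - {a})) = rk" using card_swap[OF A _] a sA by blast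
    then have "insert s (A - {a}) \<in> Bs" using indep_card_basis s(2) by blast
    moreover have "insert a (C - {s}) \<in> Bs" using sY Y_def by blast
    ultimately show False using no sC sA by blast
  qed
  have YC: "Y \<subseteq> C" unfolding Y_def by blast
  have Yind: "indep Bs Y" using indep_subset[OF basis_indep[OF C] YC] .
  define Q where "Q = (\<lambda>T. Y \<subseteq> T \<and> T \<subseteq> S \<and> indep Bs T)"
  have Q0: "Q Y" unfolding Q_def S_def using Yind by blast
  have Qb: "\<forall>T. Q T \<longrightarrow> card T < Suc rk" unfolding Q_def using indep_card by (simp add: le_imp_less_Suc)
  obtain T where T: "Q T" and Tmax: "\<forall>T'. Q T' \<longrightarrow> card T' \<le> card T"
    using Lattices_Big.ex_has_greatest_nat[of Q Y card "Suc rk", OF Q0 Qb] by blast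
  have TY: "Y \<subseteq> T" and TS: "T \<subseteq> S" and Ti: "indep Bs T" using T unfolding Q_def by auto
  have "card T \<noteq> rk" using noS TS Ti by blast
  then have cT1: "card T < rk" using indep_card[OF Ti] by simp
  have cT2: "\<not> card T < card (A - {a})"
  proof
    assume "card T < card (A - {a})"
    then obtain t where t: "t \<in> (A - {a}) - T" "indep Bs (insert t T)" using augment[OF Ti Aa] by blast
    have "Q (insert t T)" unfolding Q_def using TY TS t unfolding S_def by auto
    then have "card (insert t T) \<le> card T" using Tmax by blast
    then show False using t indep_fin[OF Ti] by simp
  qed
  have nT: "\<not> indep Bs (insert a T)" using Yi indep_subset TY by blast
  have "card T < card A" using cT1 cA by simp
  then obtain x where x: "x \<in> A - T" "indep Bs (insert x T)" using augment[OF Ti basis_indep[OF A]] by blast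
  have "x \<noteq> a" using x nT by blast
  then have "insert x T \<subseteq> S" using x TS unfolding S_def by blast
  moreover have "card (insert x T) = rk" using x indep_fin[OF Ti] cT1 cT2 cAa by simp
  ultimately show False using noS x(2) by blast
qed

lemma lweight_swap: "finite C \<Longrightarrow> c \<in> C \<Longrightarrow> a \<notin> C \<Longrightarrow>
   lweight l (insert a (C - {c})) = lweight l C - l c + l a"
  unfolding lweight_def by (simp add: sum_diff1)

lemma exch_dec_aux:
  "\<And>C. A \<in> Bs \<Longrightarrow> C \<in> Bs \<Longrightarrow> card (A - C) = m \<Longrightarrow> lweight l C < lweight l A \<Longrightarrow>
     \<exists>a\<in>A - C. \<exists>c\<in>C - A. insert c (A - {a}) \<in> Bs \<and> l c < l a"
proof (induction m)
  case (0 C)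
  then have "A \<subseteq> C" using finB by auto
  then have "A = C" using basis_sub_eq 0 by blast
  then show ?case using 0 by simp
next
  case (Suc m C)
  then obtain a where a: "a \<in> A - C" by (metis card.empty ex_in_conv nat.simps(3))
  obtain c where c: "c \<in> C - A" "insert c (A - {a}) \<in> Bs" "insert a (C - {c}) \<in> Bs"
    using sym_exch[OF Suc.prems(1) Suc.prems(2) a] by blast
  show ?case
  proof (cases "l c < l a")
    case True
    then show ?thesis using a c by blast
  next
    case False
    define C' where "C' = insert a (C - {c})"
    have "lweight l C' = lweight l C - l c + l a"
      using lweight_swap[of C c a l] finB[OF Suc.prems(2)] a c C'_def by blast
    then have w: "lweight l C' < lweight l A" using False Suc.prems(4) by simp
    have "A - C' = (A - C) - {a}" using C'_def c by auto
    then have "card (A - C') = m" using Suc.prems(3) a finB[OF Suc.prems(1)] by simp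
    then obtain a' c' where ac: "a' \<in> A - C'" "c' \<in> C' - A" "insert c' (A - {a'}) \<in> Bs" "l c' < l a'"
      using Suc.IH[OF Suc.prems(1) c(3)[folded C'_def] _ w] by blast
    have "a' \<in> A - C" using ac(1) C'_def c by auto
    moreover have "c' \<in> C - A" using ac(2) C'_def a by auto
    ultimately show ?thesis using ac by blast
  qed
qed

lemma exch_dec: "A \<in> Bs \<Longrightarrow> C \<in> Bs \<Longrightarrow> lweight l C < lweight l A \<Longrightarrow>
     \<exists>a\<in>A - C. \<exists>c\<in>C - A. insert c (A - {a}) \<in> Bs \<and> l c < l a"
  using exch_dec_aux by blast

lemma swap_form: "X \<in> Bs \<Longrightarrow> Y \<in> Bs \<Longrightarrow> b \<in> Y \<Longrightarrow> Y - {b} \<subseteq> X \<Longrightarrow> X \<noteq> Y \<Longrightarrow>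
   \<exists>e. e \<notin> Y \<and> X = insert e (Y - {b})"
proof -
  assume X: "X \<in> Bs" and Y: "Y \<in> Bs" and b: "b \<in> Y" and s: "Y - {b} \<subseteq> X" and ne: "X \<noteq> Y"
  have bX: "b \<notin> X"
  proof
    assume "b \<in> X"
    then have "Y \<subseteq> X" using s by blast
    then show False using basis_sub_eq Y X ne by blast
  qed
  have "\<not> X \<subseteq> Y - {b}"
  proof
    assume "X \<subseteq> Y - {b}"
    then have "card X \<le> card (Y - {b})" using finB[OF Y] card_mono by blast
    moreover have "rk \<ge> 1" using rk_pos[OF Y b] .
    ultimately show False using card_minus1[OF Y b] card_basis[OF X] by simp
  qed
  then obtain e where e: "e \<in> X" "e \<notin> Y - {b}" by blast
  then have eY: "e \<notin> Y" using bX by auto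
  have sb: "insert e (Y - {b}) \<subseteq> X" using e s by blast
  have "card (insert e (Y - {b})) = rk" using card_swap[OF Y b] eY by blast
  then have "card (insert e (Y - {b})) = card X" using card_basis[OF X] by simp
  then have "insert e (Y - {b}) = X" using card_subset_eq[OF finB[OF X] sb] by blast
  then have "X = insert e (Y - {b})" by simp
  then show ?thesis using eY by blast
qed

end

locale pshell = mat +
  fixes L :: "'a set list"
  assumes P: "pinned_broken_line_shelling Bs L"
begin

lemma distL: "distinct L" and setL: "set L = Bs" and Lne: "L \<noteq> []"
  using P unfolding pinned_broken_line_shelling_def by auto

lemma wit: "k < length L \<Longrightarrow> \<exists>l. (\<forall>j<length L. lweight l (L!j) < lweight l (L!k) \<longleftrightarrow> j < k) \<and>
        (\<forall>j<length L. j \<noteq> 0 \<longrightarrow> lweight l (L!0) < lweight l (L!j))"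
  using P unfolding pinned_broken_line_shelling_def by blast

lemma Lin: "k < length L \<Longrightarrow> L!k \<in> Bs"
  using setL nth_mem by blast

lemma idx: "X \<in> Bs \<Longrightarrow> \<exists>j<length L. L!j = X"
proof -
  assume "X \<in> Bs"
  then have "X \<in> set L" using setL by simp
  then show ?thesis by (simp add: in_set_conv_nth)
qed

lemma Linj: "i < length L \<Longrightarrow> j < length L \<Longrightarrow> L!i = L!j \<Longrightarrow> i = j"
  using distL nth_eq_iff_index_eq by blast

lemma len_pos: "0 < length L" using Lne by simp

lemma pinned_min: "k < length L \<Longrightarrow> (\<forall>j<length L. j \<noteq> 0 \<longrightarrow> lweight l (L!0) < lweight l (L!j)) \<Longrightarrow>
   X \<in> Bs \<Longrightarrow> X \<noteq> L!0 \<Longrightarrow> lweight l (L!0) < lweight l X"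
proof -
  assume k: "k < length L" and pin: "\<forall>j<length L. j \<noteq> 0 \<longrightarrow> lweight l (L!0) < lweight l (L!j)"
     and X: "X \<in> Bs" and X0: "X \<noteq> L!0"
  obtain j where j: "j < length L" "L!j = X" using idx[OF X] by blast
  have "j \<noteq> 0" using j X0 by auto
  then show ?thesis using pin j by auto
qed

lemma earlier: "(\<forall>j<length L. lweight l (L!j) < lweight l (L!k) \<longleftrightarrow> j < k) \<Longrightarrow>
   X \<in> Bs \<Longrightarrow> lweight l X < lweight l (L!k) \<Longrightarrow> \<exists>j<k. L!j = X"
proof -
  assume l: "\<forall>j<length L. lweight l (L!j) < lweight l (L!k) \<longleftrightarrow> j < k"
     and X: "X \<in> Bs" and w: "lweight l X < lweight l (L!k)"
  obtain j where j: "j < length L" "L!j = X" using idx[OF X] by blast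
  then have "j < k" using l w by auto
  then show ?thesis using j by blast
qed

definition Rk where "Rk k = {b \<in> L!k. \<exists>m<k. L!k - {b} \<subseteq> L!m}"

lemma Rk_sub: "Rk k \<subseteq> L!k" unfolding Rk_def by blast

lemma new_iff:
  assumes k: "k < length L" and T: "T \<subseteq> L!k"
  shows "(\<not>(\<exists>m<k. T \<subseteq> L!m)) \<longleftrightarrow> Rk k \<subseteq> T"
proof
  assume nw: "\<not>(\<exists>m<k. T \<subseteq> L!m)"
  show "Rk k \<subseteq> T"
  proof
    fix b assume b: "b \<in> Rk k"
    then obtain m where m: "m < k" "L!k - {b} \<subseteq> L!m" unfolding Rk_def by blast
    show "b \<in> T"
    proof (rule ccontr)
      assume "b \<notin> T"
      then have "T \<subseteq> L!m" using T m by blast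
      then show False using nw m by blast
    qed
  qed
next
  assume R: "Rk k \<subseteq> T"
  show "\<not>(\<exists>m<k. T \<subseteq> L!m)"
  proof
    assume "\<exists>m<k. T \<subseteq> L!m"
    then obtain m where m: "m < k" "T \<subseteq> L!m" by blast
    obtain l where l: "\<forall>j<length L. lweight l (L!j) < lweight l (L!k) \<longleftrightarrow> j < k" using wit[OF k] by blast
    have mk: "m < length L" using m k by simp
    have "lweight l (L!m) < lweight l (L!k)" using l m mk by blast
    then obtain a c where a: "a \<in> L!k - L!m" and c: "c \<in> L!m - L!k"
        and X: "insert c (L!k - {a}) \<in> Bs" and lc: "l c < l a"
      using exch_dec[OF Lin[OF k] Lin[OF mk]] by blast
    have "lweight l (insert c (L!k - {a})) = lweight l (L!k) - l a + l c"
      using lweight_swap[of "L!k" a c l] finB[OF Lin[OF k]] a c by blast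
    then have "lweight l (insert c (L!k - {a})) < lweight l (L!k)" using lc by simp
    then obtain j where j: "j < k" "L!j = insert c (L!k - {a})" using earlier[OF l X] by blast
    then have "a \<in> Rk k" using a unfolding Rk_def by blast
    then have "a \<in> L!m" using R m by blast
    then show False using a by blast
  qed
qed

lemma restr_eq:
  assumes k: "k < length L" shows "restr L k = Rk k"
proof -
  have eq: "{F. F \<subseteq> L!k \<and> \<not>(\<exists>k'<k. F \<subseteq> L!k')} = {F. Rk k \<subseteq> F \<and> F \<subseteq> L!k}"
    using new_iff[OF k] by blast
  have RkS: "Rk k \<subseteq> L!k" by (rule Rk_sub)
  show ?thesis unfolding restr_def
  proof (rule the_equality)
    show "Rk k \<subseteq> L!k \<and> {F. F \<subseteq> L!k \<and> \<not>(\<exists>k'<k. F \<subseteq> L!k')} = {F. Rk k \<subseteq> F \<and> F \<subseteq> L!k}"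
      using eq RkS by blast
  next
    fix R assume "R \<subseteq> L!k \<and> {F. F \<subseteq> L!k \<and> \<not>(\<exists>k'<k. F \<subseteq> L!k')} = {F. R \<subseteq> F \<and> F \<subseteq> L!k}"
    then have R: "R \<subseteq> L!k" and e2: "{F. R \<subseteq> F \<and> F \<subseteq> L!k} = {F. Rk k \<subseteq> F \<and> F \<subseteq> L!k}" using eq by auto
    have "R \<in> {F. R \<subseteq> F \<and> F \<subseteq> L!k}" using R by blast
    then have 1: "Rk k \<subseteq> R" using e2 by blast
    have "Rk k \<in> {F. Rk k \<subseteq> F \<and> F \<subseteq> L!k}" using RkS by blast
    then have 2: "R \<subseteq> Rk k" using e2 by blast
    show "R = Rk k" using 1 2 by blast
  qed
qed

lemma Rk0: "Rk 0 = {}" unfolding Rk_def by blast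

lemma Rk_ne: "0 < k \<Longrightarrow> k < length L \<Longrightarrow> Rk k \<noteq> {}"
  using new_iff[of k "{}"] by blast

lemma Rk_inj: assumes a: "a < length L" and b: "b < length L" and e: "Rk a = Rk b" shows "a = b"
proof (rule ccontr)
  assume "a \<noteq> b"
  then consider "a < b" | "b < a" by linarith
  then show False
  proof cases
    case 1
    have "Rk a \<subseteq> L!a" by (rule Rk_sub)
    moreover have "\<not>(\<exists>m<b. Rk a \<subseteq> L!m)" using new_iff[OF b, of "Rk a"] e Rk_sub by blast
    ultimately show False using 1 by blast
  next
    case 2
    have "Rk b \<subseteq> L!b" by (rule Rk_sub)
    moreover have "\<not>(\<exists>m<a. Rk b \<subseteq> L!m)" using new_iff[OF a, of "Rk b"] e Rk_sub by blast
    ultimately show False using 2 by blast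
  qed
qed

lemma outside_R:
  assumes k: "k < length L" and e: "e \<in> L!k - L!0"
  shows "e \<in> Rk k"
proof -
  obtain l where l: "\<forall>j<length L. lweight l (L!j) < lweight l (L!k) \<longleftrightarrow> j < k"
     and pin: "\<forall>j<length L. j \<noteq> 0 \<longrightarrow> lweight l (L!0) < lweight l (L!j)" using wit[OF k] by blast
  obtain c where c: "c \<in> L!0 - L!k" "insert c (L!k - {e}) \<in> Bs" "insert e (L!0 - {c}) \<in> Bs"
    using sym_exch[OF Lin[OF k] Lin[OF len_pos] e] by blast
  have "insert e (L!0 - {c}) \<noteq> L!0" using e by blast
  then have "lweight l (L!0) < lweight l (insert e (L!0 - {c}))"
    using pinned_min[OF k pin c(3)] by blast
  moreover have "lweight l (insert e (L!0 - {c})) = lweight l (L!0) - l c + l e"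
    using lweight_swap[of "L!0" c e l] finB[OF Lin[OF len_pos]] c e by blast
  ultimately have lce: "l c < l e" by simp
  have "lweight l (insert c (L!k - {e})) = lweight l (L!k) - l e + l c"
    using lweight_swap[of "L!k" e c l] finB[OF Lin[OF k]] c e by blast
  then have "lweight l (insert c (L!k - {e})) < lweight l (L!k)" using lce by simp
  then obtain j where j: "j < k" "L!j = insert c (L!k - {e})" using earlier[OF l c(2)] by blast
  then show ?thesis using e unfolding Rk_def by blast
qed

lemma inside_R:
  assumes k: "k < length L" and b: "b \<in> Rk k" and b0: "b \<in> L!0"
  shows "\<exists>e m. e \<in> L!0 - L!k \<and> m < k \<and> L!m = insert e (L!k - {b})"
proof -
  obtain l where l: "\<forall>j<length L. lweight l (L!j) < lweight l (L!k) \<longleftrightarrow> j < k"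
     and pin: "\<forall>j<length L. j \<noteq> 0 \<longrightarrow> lweight l (L!0) < lweight l (L!j)" using wit[OF k] by blast
  have bk: "b \<in> L!k" using b Rk_sub by blast
  obtain m where m: "m < k" "L!k - {b} \<subseteq> L!m" using b unfolding Rk_def by blast
  have mk: "m < length L" using m k by simp
  have "L!m \<noteq> L!k" using Linj[OF mk k] m by auto
  then obtain e0 where e0: "e0 \<notin> L!k" "L!m = insert e0 (L!k - {b})"
    using swap_form[OF Lin[OF mk] Lin[OF k] bk m(2)] by blast
  have "lweight l (L!m) < lweight l (L!k)" using l m mk by blast
  moreover have "lweight l (L!m) = lweight l (L!k) - l b + l e0"
    using e0 lweight_swap[of "L!k" b e0 l] finB[OF Lin[OF k]] bk by simp
  ultimately have le0: "l e0 < l b" by simp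
  define D where "D = L!k - {b}"
  define Xs where "Xs = {x. x \<notin> L!k \<and> insert x D \<in> Bs}"
  have e0X: "e0 \<in> Xs" unfolding Xs_def D_def using e0 Lin[OF mk] by simp
  have XsE: "Xs \<subseteq> E" unfolding Xs_def using sub by blast
  have finX: "finite Xs" using finite_subset[OF XsE finE] .
  obtain x0 where x0: "x0 \<in> Xs" and x0min: "\<forall>x\<in>Xs. l x0 \<le> l x"
  proof -
    have "finite (l ` Xs)" "l ` Xs \<noteq> {}" using finX e0X by auto
    then have "Min (l ` Xs) \<in> l ` Xs" by (rule Min_in)
    then obtain x0 where "Min (l ` Xs) = l x0" "x0 \<in> Xs" by (rule imageE)
    moreover have "\<forall>x\<in>Xs. Min (l ` Xs) \<le> l x" using finX by simp
    ultimately show ?thesis using that by auto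
  qed
  have x0k: "x0 \<notin> L!k" and x0B: "insert x0 D \<in> Bs" using x0 unfolding Xs_def by auto
  have lx0: "l x0 < l b" using x0min e0X le0 by fastforce
  have x00: "x0 \<in> L!0"
  proof (rule ccontr)
    assume nx: "x0 \<notin> L!0"
    have x0in: "x0 \<in> insert x0 D - L!0" using nx by blast
    from sym_exch[OF x0B Lin[OF len_pos] x0in] obtain c where c1: "c \<in> L!0 - insert x0 D"
      and c23: "insert c (insert x0 D - {x0}) \<in> Bs \<and> insert x0 (L!0 - {c}) \<in> Bs" ..
    have c: "c \<in> L!0 - insert x0 D" "insert c (insert x0 D - {x0}) \<in> Bs" "insert x0 (L!0 - {c}) \<in> Bs"
      using c1 c23 by auto
    have Dx: "insert x0 D - {x0} = D" using x0k unfolding D_def by blast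
    have "insert x0 (L!0 - {c}) \<noteq> L!0" using nx by blast
    then have "lweight l (L!0) < lweight l (insert x0 (L!0 - {c}))"
      by (rule pinned_min[OF k pin c(3)])
    moreover have "lweight l (insert x0 (L!0 - {c})) = lweight l (L!0) - l c + l x0"
    proof -
      have "c \<in> L!0" using c(1) by blast
      then show ?thesis using lweight_swap[OF finB[OF Lin[OF len_pos]] _ nx] by blast
    qed
    ultimately have lc: "l c < l x0" by simp
    show False
    proof (cases "c = b")
      case True
      then show False using lc lx0 by simp
    next
      case False
      then have "c \<notin> L!k" using c unfolding D_def by blast
      moreover have "insert c D \<in> Bs" using c(2) Dx by simp
      ultimately have "c \<in> Xs" unfolding Xs_def by blast
      then show False using x0min lc by fastforce
    qed
  qed
  have "lweight l (insert x0 D) = lweight l (L!k) - l b + l x0"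
    unfolding D_def by (rule lweight_swap[OF finB[OF Lin[OF k]] bk x0k])
  then have "lweight l (insert x0 D) < lweight l (L!k)" using lx0 by simp
  then obtain j where j: "j < k" "L!j = insert x0 D" using earlier[OF l x0B] by blast
  then show ?thesis using x00 x0k unfolding D_def by blast
qed

lemma L0_diff_ne: "0 < k \<Longrightarrow> k < length L \<Longrightarrow> L!k - L!0 \<noteq> {}"
proof
  assume k: "0 < k" "k < length L" and e: "L!k - L!0 = {}"
  then have "L!k \<subseteq> L!0" by blast
  then have "L!k = L!0" using basis_sub_eq Lin k len_pos by blast
  then show False using Linj[OF k(2) len_pos] k by simp
qed

lemma first_with:
  assumes J: "indep Bs J" and J0: "J \<inter> L!0 = {}"
  shows "\<exists>c<length L. L!c - L!0 = J \<and> Rk c = J"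
proof -
  obtain W where W: "W \<subseteq> L!0" "J \<union> W \<in> Bs" using extend[OF J Lin[OF len_pos]] by blast
  obtain j where j: "j < length L" "L!j = J \<union> W" using idx[OF W(2)] by blast
  have "L!j - L!0 = J" using j W J0 by blast
  define c where "c = (LEAST c. c < length L \<and> L!c - L!0 = J)"
  have jP: "j < length L \<and> L!j - L!0 = J" using j \<open>L!j - L!0 = J\<close> by blast
  have c: "c < length L \<and> L!c - L!0 = J" unfolding c_def
    by (rule LeastI[of "\<lambda>c. c < length L \<and> L!c - L!0 = J" j, OF jP])
  have cmin: "\<not>(L!m - L!0 = J)" if m: "m < c" for m
  proof -
    have "\<not> (m < length L \<and> L!m - L!0 = J)"
      using m unfolding c_def by (rule not_less_Least)
    then show ?thesis using m c by simp
  qed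
  have 1: "Rk c - L!0 = J"
  proof
    show "Rk c - L!0 \<subseteq> J" using Rk_sub c by blast
    show "J \<subseteq> Rk c - L!0" using outside_R c J0 by blast
  qed
  have 2: "Rk c \<inter> L!0 = {}"
  proof (rule ccontr)
    assume "Rk c \<inter> L!0 \<noteq> {}"
    then obtain b where b: "b \<in> Rk c" "b \<in> L!0" by blast
    have "\<exists>e m. e \<in> L!0 - L!c \<and> m < c \<and> L!m = insert e (L!c - {b})"
      using c by (intro inside_R b) auto
    then obtain e m where em: "e \<in> L!0 - L!c" "m < c" "L!m = insert e (L!c - {b})" by blast
    have "L!m - L!0 = insert e (L!c - {b}) - L!0" using em(3) by simp
    also have "\<dots> = L!c - L!0" using em(1) b(2) by blast
    finally have "L!m - L!0 = L!c - L!0" .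
    then show False using cmin[OF em(2)] c by simp
  qed
  show ?thesis using 1 2 c by blast
qed

end

context pshell
begin

lemma finRk: "k < length L \<Longrightarrow> finite (Rk k)"
  using finB[OF Lin] Rk_sub finite_subset by blast

lemma int_le_iff: "a < length L \<Longrightarrow> b < length L \<Longrightarrow> int_le L a b \<longleftrightarrow> Rk a \<subseteq> Rk b"
  unfolding int_le_def using restr_eq by simp

lemma int_lt_iff: "a < length L \<Longrightarrow> b < length L \<Longrightarrow> int_lt L a b \<longleftrightarrow> Rk a \<subset> Rk b"
  unfolding int_lt_def using int_le_iff by auto

lemma min_iff: "int_is_min L m \<longleftrightarrow> m = 0"
proof
  assume a: "int_is_min L m"
  then have m: "m < length L" and "int_le L m 0" unfolding int_is_min_def using len_pos by auto
  then have "Rk m \<subseteq> Rk 0" using int_le_iff len_pos by blast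
  then have "Rk m = {}" using Rk0 by blast
  then show "m = 0" using Rk_ne m by blast
next
  assume "m = 0"
  then show "int_is_min L m" unfolding int_is_min_def using len_pos int_le_iff Rk0 by simp
qed

lemma covers_iff: "a < length L \<Longrightarrow> b < length L \<Longrightarrow>
   int_covers L a b \<longleftrightarrow> Rk a \<subset> Rk b \<and> \<not>(\<exists>c<length L. Rk a \<subset> Rk c \<and> Rk c \<subset> Rk b)"
proof -
  assume a: "a < length L" and b: "b < length L"
  have e: "\<And>c. c < length L \<Longrightarrow> (int_lt L a c \<and> int_lt L c b) \<longleftrightarrow> (Rk a \<subset> Rk c \<and> Rk c \<subset> Rk b)"
    using int_lt_iff a b by simp
  have "(\<exists>c<length L. int_lt L a c \<and> int_lt L c b) \<longleftrightarrow> (\<exists>c<length L. Rk a \<subset> Rk c \<and> Rk c \<subset> Rk b)"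
  proof
    assume "\<exists>c<length L. int_lt L a c \<and> int_lt L c b"
    then obtain c where "c < length L" "int_lt L a c \<and> int_lt L c b" by blast
    then show "\<exists>c<length L. Rk a \<subset> Rk c \<and> Rk c \<subset> Rk b" using e by blast
  next
    assume "\<exists>c<length L. Rk a \<subset> Rk c \<and> Rk c \<subset> Rk b"
    then obtain c where "c < length L" "Rk a \<subset> Rk c \<and> Rk c \<subset> Rk b" by blast
    then show "\<exists>c<length L. int_lt L a c \<and> int_lt L c b" using e by blast
  qed
  then show ?thesis unfolding int_covers_def using int_lt_iff[OF a b] a b by simp
qed

lemma singleton_R: assumes a: "a < length L" and x: "Rk a = {x}" shows "x \<notin> L!0"
proof -
  have "a \<noteq> 0"
  proof
    assume "a = 0"
    then have "Rk a = {}" using Rk0 by simp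
    then show False using x by simp
  qed
  then have "L!a - L!0 \<noteq> {}" using L0_diff_ne a by blast
  then obtain e where e: "e \<in> L!a - L!0" by blast
  then have "e \<in> Rk a" using outside_R a by blast
  then show ?thesis using e x by auto
qed

lemma atom_exists: assumes e: "e \<in> L!a - L!0" and a: "a < length L"
  shows "\<exists>c<length L. Rk c = {e}"
proof -
  have "indep Bs {e}" unfolding indep_def using e Lin[OF a] by blast
  moreover have "{e} \<inter> L!0 = {}" using e by blast
  ultimately show ?thesis using first_with by blast
qed

lemma atom_iff: assumes a: "a < length L" shows "int_atom L a \<longleftrightarrow> card (Rk a) = 1"
proof
  assume "int_atom L a"
  then obtain m where m: "int_is_min L m" "int_covers L m a" unfolding int_atom_def by blast
  have "m = 0" using m(1) min_iff by blast
  then have cov: "int_covers L 0 a" using m(2) by simp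
  then have cc: "Rk 0 \<subset> Rk a \<and> \<not>(\<exists>c<length L. Rk 0 \<subset> Rk c \<and> Rk c \<subset> Rk a)"
    using covers_iff[OF len_pos a] by simp
  then have ne: "Rk 0 \<subset> Rk a" and nc: "\<not>(\<exists>c<length L. Rk 0 \<subset> Rk c \<and> Rk c \<subset> Rk a)"
    by auto
  have "a \<noteq> 0" using ne by auto
  then have "L!a - L!0 \<noteq> {}" using L0_diff_ne a by blast
  then obtain e where e: "e \<in> L!a - L!0" by blast
  then have eR: "e \<in> Rk a" using outside_R a by blast
  obtain c where c: "c < length L" "Rk c = {e}" using atom_exists[OF e a] by blast
  have "Rk a = {e}"
  proof (rule ccontr)
    assume "Rk a \<noteq> {e}"
    then have "Rk c \<subset> Rk a" using c(2) eR by auto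
    moreover have "Rk 0 \<subset> Rk c" using c(2) Rk0 by auto
    ultimately show False using nc c by blast
  qed
  then show "card (Rk a) = 1" by simp
next
  assume "card (Rk a) = 1"
  then obtain x where x: "Rk a = {x}" using card_1_singletonE by blast
  have "int_covers L 0 a"
  proof -
    have "Rk 0 \<subset> Rk a" using x Rk0 by auto
    moreover have "\<not>(\<exists>c<length L. Rk 0 \<subset> Rk c \<and> Rk c \<subset> Rk a)"
    proof
      assume "\<exists>c<length L. Rk 0 \<subset> Rk c \<and> Rk c \<subset> Rk a"
      then obtain c where "Rk 0 \<subset> Rk c" "Rk c \<subset> Rk a" by blast
      then have "{} \<subset> Rk c" "Rk c \<subset> {x}" using x Rk0 by auto
      then show False by blast
    qed
    ultimately show ?thesis using covers_iff[OF len_pos a] by blast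
  qed
  moreover have "int_is_min L 0" using min_iff by simp
  ultimately show "int_atom L a" unfolding int_atom_def by blast
qed

lemma atoms_below_eq: "k < length L \<Longrightarrow>
   atoms_below L k = {a. a < length L \<and> card (Rk a) = 1 \<and> Rk a \<subseteq> Rk k}"
proof -
  assume k: "k < length L"
  show ?thesis unfolding atoms_below_def
  proof (intro Collect_cong)
    fix a
    show "(a < length L \<and> int_atom L a \<and> int_le L a k) = (a < length L \<and> card (Rk a) = 1 \<and> Rk a \<subseteq> Rk k)"
    proof (cases "a < length L")
      case True
      then show ?thesis using atom_iff[OF True] int_le_iff[OF True k] by simp
    qed simp
  qed
qed

lemma target_eq: "{a. a < length L \<and> (\<exists>i\<in>I. restr L a = {i})} = {a. a < length L \<and> (\<exists>i\<in>I. Rk a = {i})}"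
proof (intro Collect_cong)
  fix a
  show "(a < length L \<and> (\<exists>i\<in>I. restr L a = {i})) = (a < length L \<and> (\<exists>i\<in>I. Rk a = {i}))"
  proof (cases "a < length L")
    case True
    then show ?thesis using restr_eq[OF True] by simp
  qed simp
qed

lemma atoms_below_iff:
  assumes I: "indep Bs I" and I0: "I \<inter> L!0 = {}" and k: "k < length L"
  shows "atoms_below L k = {a. a < length L \<and> (\<exists>i\<in>I. restr L a = {i})} \<longleftrightarrow> L!k - L!0 = I"
proof
  assume eq0: "atoms_below L k = {a. a < length L \<and> (\<exists>i\<in>I. restr L a = {i})}"
  have eq: "{a. a < length L \<and> card (Rk a) = 1 \<and> Rk a \<subseteq> Rk k} = {a. a < length L \<and> (\<exists>i\<in>I. Rk a = {i})}"
    using eq0 atoms_below_eq[OF k] target_eq by simp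
  show "L!k - L!0 = I"
  proof
    show "L!k - L!0 \<subseteq> I"
    proof
      fix e assume e: "e \<in> L!k - L!0"
      obtain c where c: "c < length L" "Rk c = {e}" using atom_exists[OF e k] by blast
      have "e \<in> Rk k" using outside_R k e by blast
      then have "c \<in> {a. a < length L \<and> card (Rk a) = 1 \<and> Rk a \<subseteq> Rk k}" using c by simp
      then have "c \<in> {a. a < length L \<and> (\<exists>i\<in>I. Rk a = {i})}" using eq by blast
      then show "e \<in> I" using c by auto
    qed
  next
    show "I \<subseteq> L!k - L!0"
    proof
      fix i assume i: "i \<in> I"
      have "indep Bs {i}" using indep_subset[OF I] i by blast
      moreover have "{i} \<inter> L!0 = {}" using i I0 by blast
      ultimately obtain c where c: "c < length L" "Rk c = {i}" using first_with by blast
      then have "c \<in> {a. a < length L \<and> (\<exists>i\<in>I. Rk a = {i})}" using i by blast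
      then have "c \<in> {a. a < length L \<and> card (Rk a) = 1 \<and> Rk a \<subseteq> Rk k}" using eq by blast
      then have "i \<in> Rk k" using c by simp
      then show "i \<in> L!k - L!0" using Rk_sub i I0 by blast
    qed
  qed
next
  assume kI: "L!k - L!0 = I"
  have "{a. a < length L \<and> card (Rk a) = 1 \<and> Rk a \<subseteq> Rk k} = {a. a < length L \<and> (\<exists>i\<in>I. Rk a = {i})}"
  proof (intro Collect_cong iffI)
    fix a assume "a < length L \<and> card (Rk a) = 1 \<and> Rk a \<subseteq> Rk k"
    then have a: "a < length L" "card (Rk a) = 1" "Rk a \<subseteq> Rk k" by auto
    then obtain x where x: "Rk a = {x}" using card_1_singletonE by blast
    have "x \<notin> L!0" using singleton_R[OF a(1) x] .
    moreover have "x \<in> L!k" using a(3) x Rk_sub by blast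
    ultimately have "x \<in> I" using kI by blast
    then show "a < length L \<and> (\<exists>i\<in>I. Rk a = {i})" using a x by blast
  next
    fix a assume "a < length L \<and> (\<exists>i\<in>I. Rk a = {i})"
    then obtain i where a: "a < length L" "i \<in> I" "Rk a = {i}" by blast
    have "i \<in> Rk k" using outside_R[OF k] a(2) kI by blast
    then show "a < length L \<and> card (Rk a) = 1 \<and> Rk a \<subseteq> Rk k" using a by simp
  qed
  then show "atoms_below L k = {a. a < length L \<and> (\<exists>i\<in>I. restr L a = {i})}"
    using atoms_below_eq[OF k] target_eq by simp
qed

lemma H:
  assumes k: "k < length L" and ne: "Rk k \<noteq> {}"
  shows "\<exists>a<length L. Rk a \<subseteq> Rk k \<and> card (Rk a) + 1 = card (Rk k)"
proof -
  define P where "P = Rk k"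
  have finP: "finite P" using finRk[OF k] P_def by simp
  have PL: "P \<subseteq> L!k" using Rk_sub P_def by simp
  define Q where "Q = (\<lambda>x m. m < length L \<and> P - {x} \<subseteq> L!m)"
  define phi where "phi = (\<lambda>x. LEAST m. Q x m)"
  have phiQ: "Q x (phi x)" for x
  proof -
    have "Q x k" unfolding Q_def using k PL by blast
    then show ?thesis unfolding phi_def by (rule LeastI)
  qed
  have philt: "phi x < k" if x: "x \<in> P" for x
  proof -
    have "\<not> Rk k \<subseteq> P - {x}" using x P_def by blast
    then have "\<exists>m<k. P - {x} \<subseteq> L!m" using new_iff[OF k, of "P - {x}"] PL by blast
    then obtain m where m: "m < k" "P - {x} \<subseteq> L!m" by blast
    then have "Q x m" unfolding Q_def using k by simp
    then have "phi x \<le> m" unfolding phi_def by (rule Least_le)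
    then show ?thesis using m by simp
  qed
  have phimin: "\<not> (P - {x} \<subseteq> L!m)" if "m < phi x" for x m
  proof -
    have "\<not> Q x m" using that unfolding phi_def by (rule not_less_Least)
    moreover have "m < length L" using that phiQ[of x] unfolding Q_def by simp
    ultimately show ?thesis unfolding Q_def by simp
  qed
  obtain x1 where x1: "x1 \<in> P" using ne P_def by blast
  have bnd: "\<forall>y. y \<in> P \<longrightarrow> phi y < length L" using phiQ unfolding Q_def by blast
  obtain x0 where x0: "x0 \<in> P" and x0max: "\<forall>y. y \<in> P \<longrightarrow> phi y \<le> phi x0"
    using Lattices_Big.ex_has_greatest_nat[of "\<lambda>y. y \<in> P" x1 phi "length L", OF x1 bnd] by blast
  define m where "m = phi x0"
  have mL: "m < length L" and mS: "P - {x0} \<subseteq> L!m" using phiQ[of x0] unfolding Q_def m_def by auto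
  have mk: "m < k" using philt[OF x0] m_def by simp
  have nm: "\<not>(\<exists>m'<m. P - {x0} \<subseteq> L!m')" using phimin m_def by blast
  have R1: "Rk m \<subseteq> P - {x0}" using new_iff[OF mL mS] nm by blast
  have R2: "P - {x0} \<subseteq> Rk m"
  proof
    fix y assume y: "y \<in> P - {x0}"
    show "y \<in> Rk m"
    proof (rule ccontr)
      assume ny: "y \<notin> Rk m"
      have s1: "Rk m \<subseteq> P - {x0} - {y}" using R1 ny by blast
      have s2: "P - {x0} - {y} \<subseteq> L!m" using mS by blast
      have nw: "\<not>(\<exists>m'<m. P - {x0} - {y} \<subseteq> L!m')" using new_iff[OF mL s2] s1 by blast
      have yP: "y \<in> P" using y by blast
      have "P - {y} \<subseteq> L!(phi y)" using phiQ[of y] unfolding Q_def by blast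
      then have "P - {x0} - {y} \<subseteq> L!(phi y)" by blast
      then have "\<not> phi y < m" using nw by blast
      moreover have "phi y \<le> m" using x0max yP m_def by blast
      ultimately have "phi y = m" by simp
      then have "P - {y} \<subseteq> L!m" using phiQ[of y] unfolding Q_def by simp
      then have "P \<subseteq> L!m" using mS y by blast
      moreover have "\<not>(\<exists>m'<k. P \<subseteq> L!m')" using new_iff[OF k PL] P_def by blast
      ultimately show False using mk by blast
    qed
  qed
  have "Rk m = P - {x0}" using R1 R2 by blast
  moreover have "card (P - {x0}) + 1 = card P"
  proof -
    have "card P > 0" using finP x0 card_gt_0_iff by blast
    then show ?thesis using finP x0 by (simp add: card_Diff_singleton)
  qed
  ultimately have "Rk m \<subseteq> Rk k \<and> card (Rk m) + 1 = card (Rk k)" using P_def by auto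
  then show ?thesis using mL by blast
qed

lemma rank_eq:
  assumes rf: "int_rank_fun L \<rho>"
  shows "k < length L \<Longrightarrow> \<rho> k = card (Rk k)"
proof (induction "card (Rk k)" arbitrary: k rule: less_induct)
  case (less k)
  show ?case
  proof (cases "Rk k = {}")
    case True
    then have "k = 0" using Rk_ne less.prems by blast
    then have "int_is_min L k" using min_iff by simp
    then have "\<rho> k = 0" using rf unfolding int_rank_fun_def by blast
    then show ?thesis using True by simp
  next
    case False
    obtain a where a: "a < length L" "Rk a \<subseteq> Rk k" "card (Rk a) + 1 = card (Rk k)"
      using H[OF less.prems False] by blast
    have IH: "\<rho> a = card (Rk a)" using less.hyps[of a] a by simp
    have "int_covers L a k"
    proof -
      have ps: "Rk a \<subset> Rk k" using a by auto
      have "\<not>(\<exists>c<length L. Rk a \<subset> Rk c \<and> Rk c \<subset> Rk k)"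
      proof
        assume "\<exists>c<length L. Rk a \<subset> Rk c \<and> Rk c \<subset> Rk k"
        then obtain c where c: "c < length L" "Rk a \<subset> Rk c" "Rk c \<subset> Rk k" by blast
        have "card (Rk a) < card (Rk c)" using psubset_card_mono[OF finRk[OF c(1)] c(2)] .
        moreover have "card (Rk c) < card (Rk k)" using psubset_card_mono[OF finRk[OF less.prems] c(3)] .
        ultimately show False using a by simp
      qed
      then show ?thesis using covers_iff[OF a(1) less.prems] ps by blast
    qed
    then have "\<rho> k = \<rho> a + 1" using rf unfolding int_rank_fun_def by blast
    then show ?thesis using IH a by simp
  qed
qed

end

lemma pow_sum:
  fixes T :: "'a set"
  assumes "finite T"
  shows "(\<Sum>U\<in>Pow T. monom (1::int) (a + card U) * [:1,-1:] ^ (card T - card U)) = monom 1 a"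
  using assms
proof (induction T arbitrary: a rule: finite_induct)
  case empty
  then show ?case by simp
next
  case (insert t T)
  let ?y = "[:1,-1:] :: int poly"
  define S where "S = (\<Sum>U\<in>Pow T. monom (1::int) (a + card U) * ?y ^ (card T - card U))"
  have S: "S = monom 1 a" using insert.IH S_def by simp
  have disj: "Pow T \<inter> insert t ` Pow T = {}" using insert.hyps by auto
  have inj: "inj_on (insert t) (Pow T)"
    unfolding inj_on_def using insert.hyps by (metis PowD insert_ident subsetD)
  have fin: "finite (Pow T)" "finite (insert t ` Pow T)" using insert.hyps by auto
  have cT: "card (insert t T) = Suc (card T)" using insert.hyps by simp
  have 1: "(\<Sum>U\<in>Pow T. monom (1::int) (a + card U) * ?y ^ (card (insert t T) - card U)) = ?y * S"
    unfolding S_def sum_distrib_left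
  proof (rule sum.cong)
    fix U assume U: "U \<in> Pow T"
    have "card U \<le> card T" using U insert.hyps card_mono by blast
    then have "card (insert t T) - card U = Suc (card T - card U)" using cT by simp
    then show "monom 1 (a + card U) * ?y ^ (card (insert t T) - card U) =
        ?y * (monom 1 (a + card U) * ?y ^ (card T - card U))" by (simp add: algebra_simps)
  qed simp
  have 2: "(\<Sum>U\<in>insert t ` Pow T. monom (1::int) (a + card U) * ?y ^ (card (insert t T) - card U)) = monom 1 1 * S"
    unfolding S_def sum_distrib_left sum.reindex[OF inj] o_def
  proof (rule sum.cong)
    fix U assume U: "U \<in> Pow T"
    have tU: "t \<notin> U" using U insert.hyps by blast
    have fU: "finite U" using U insert.hyps finite_subset by blast
    have cU: "card (insert t U) = Suc (card U)" using tU fU by simp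
    have "monom (1::int) (a + card (insert t U)) = monom 1 1 * monom 1 (a + card U)"
      using cU by (simp add: mult_monom)
    moreover have "card (insert t T) - card (insert t U) = card T - card U" using cU cT by simp
    ultimately show "monom (1::int) (a + card (insert t U)) * ?y ^ (card (insert t T) - card (insert t U)) =
        monom 1 1 * (monom 1 (a + card U) * ?y ^ (card T - card U))" by (simp add: algebra_simps)
  qed simp
  have "(\<Sum>U\<in>Pow (insert t T). monom (1::int) (a + card U) * ?y ^ (card (insert t T) - card U))
      = ?y * S + monom 1 1 * S"
    unfolding Pow_insert sum.union_disjoint[OF fin disj] by (simp only: 1 2)
  also have "\<dots> = (?y + monom 1 1) * S" by (simp add: algebra_simps)
  also have "?y + monom 1 1 = 1" by (simp add: monom_Suc one_pCons)
  finally show ?case using S by simp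
qed

lemma interval_sum:
  fixes R J :: "'a set"
  assumes fJ: "finite J" and RJ: "R \<subseteq> J"
  shows "(\<Sum>G\<in>{G. R \<subseteq> G \<and> G \<subseteq> J}. monom (1::int) (card G) * [:1,-1:] ^ (card J - card G)) = monom 1 (card R)"
proof -
  define T where "T = J - R"
  have fT: "finite T" and fR: "finite R" using fJ RJ T_def finite_subset by auto
  have img: "{G. R \<subseteq> G \<and> G \<subseteq> J} = (\<lambda>U. R \<union> U) ` Pow T"
  proof
    show "{G. R \<subseteq> G \<and> G \<subseteq> J} \<subseteq> (\<lambda>U. R \<union> U) ` Pow T"
    proof
      fix G assume "G \<in> {G. R \<subseteq> G \<and> G \<subseteq> J}"
      then have G: "R \<subseteq> G" "G \<subseteq> J" by auto
      then have "G = R \<union> (G - R)" "G - R \<in> Pow T" unfolding T_def by auto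
      then show "G \<in> (\<lambda>U. R \<union> U) ` Pow T" by blast
    qed
    show "(\<lambda>U. R \<union> U) ` Pow T \<subseteq> {G. R \<subseteq> G \<and> G \<subseteq> J}" using RJ unfolding T_def by auto
  qed
  have inj: "inj_on (\<lambda>U. R \<union> U) (Pow T)"
  proof (rule inj_onI)
    fix U V assume "U \<in> Pow T" "V \<in> Pow T" "R \<union> U = R \<union> V"
    then show "U = V" unfolding T_def by blast
  qed
  have cJ: "card J = card R + card T"
  proof -
    have "J = R \<union> T" "R \<inter> T = {}" using RJ unfolding T_def by auto
    then show ?thesis using fR fT card_Un_disjoint by metis
  qed
  have "(\<Sum>G\<in>{G. R \<subseteq> G \<and> G \<subseteq> J}. monom (1::int) (card G) * [:1,-1:] ^ (card J - card G))
     = (\<Sum>U\<in>Pow T. monom (1::int) (card (R \<union> U)) * [:1,-1:] ^ (card J - card (R \<union> U)))"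
    unfolding img sum.reindex[OF inj] o_def ..
  also have "\<dots> = (\<Sum>U\<in>Pow T. monom (1::int) (card R + card U) * [:1,-1:] ^ (card T - card U))"
  proof (rule sum.cong)
    fix U assume U: "U \<in> Pow T"
    have "R \<inter> U = {}" "finite U" using U fT finite_subset unfolding T_def by auto
    then have "card (R \<union> U) = card R + card U" using fR card_Un_disjoint by blast
    then show "monom (1::int) (card (R \<union> U)) * [:1,-1:] ^ (card J - card (R \<union> U)) =
      monom (1::int) (card R + card U) * [:1,-1:] ^ (card T - card U)" using cJ by simp
  qed simp
  also have "\<dots> = monom 1 (card R)" using pow_sum[OF fT] .
  finally show ?thesis .
qed

locale pshellI = pshell +
  fixes I :: "'a set"
  assumes Iind: "indep Bs I" and I0: "I \<inter> L!0 = {}"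
begin

definition "Dl = contract_restrict_indeps E Bs I (L!0)"
definition "K = {k. k < length L \<and> L!k - L!0 = I}"
definition "dd = rk - card I"
definition "rr k = card (Rk k \<inter> L!0)"
definition "fi G = (LEAST k. k < length L \<and> G \<union> I \<subseteq> L!k)"

lemma finI: "finite I" using indep_fin[OF Iind] .

lemma Dl_eq: "Dl = {G. G \<subseteq> L!0 \<and> indep Bs (G \<union> I)}"
proof -
  have "L!0 \<subseteq> E" using sub[OF Lin[OF len_pos]] .
  then show ?thesis unfolding Dl_def contract_restrict_indeps_def using I0 by blast
qed

lemma finDl: "finite Dl"
proof -
  have "Dl \<subseteq> Pow (L!0)" unfolding Dl_eq by blast
  then show ?thesis using finB[OF Lin[OF len_pos]] finite_subset by blast
qed

lemma finK: "finite K"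
proof -
  have "K \<subseteq> {..<length L}" unfolding K_def by blast
  then show ?thesis using finite_subset by blast
qed

lemma K_R: assumes k: "k \<in> K" shows "Rk k = I \<union> (Rk k \<inter> L!0)"
proof -
  have kl: "k < length L" and kI: "L!k - L!0 = I" using k unfolding K_def by auto
  show ?thesis
  proof
    show "Rk k \<subseteq> I \<union> (Rk k \<inter> L!0)" using Rk_sub kI by blast
    show "I \<union> (Rk k \<inter> L!0) \<subseteq> Rk k" using outside_R[OF kl] kI by blast
  qed
qed

lemma K_card: assumes k: "k \<in> K" shows "card (Rk k) = card I + rr k"
proof -
  have kl: "k < length L" using k unfolding K_def by auto
  have "finite (Rk k \<inter> L!0)" using finRk[OF kl] by blast
  moreover have "I \<inter> (Rk k \<inter> L!0) = {}" using I0 by blast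
  ultimately have "card (I \<union> (Rk k \<inter> L!0)) = card I + card (Rk k \<inter> L!0)"
    using finI card_Un_disjoint by blast
  then show ?thesis using K_R[OF k] unfolding rr_def by simp
qed

lemma K_L: assumes k: "k \<in> K" shows "L!k = I \<union> (L!k \<inter> L!0)" and "card (L!k \<inter> L!0) = dd"
proof -
  have kl: "k < length L" and kI: "L!k - L!0 = I" using k unfolding K_def by auto
  show e: "L!k = I \<union> (L!k \<inter> L!0)" using kI by blast
  have "finite (L!k \<inter> L!0)" using finB[OF Lin[OF kl]] by blast
  moreover have "I \<inter> (L!k \<inter> L!0) = {}" using I0 by blast
  ultimately have "card (I \<union> (L!k \<inter> L!0)) = card I + card (L!k \<inter> L!0)"
    using finI card_Un_disjoint by blast
  then have "card (L!k) = card I + card (L!k \<inter> L!0)" using e by simp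
  then show "card (L!k \<inter> L!0) = dd" using card_basis[OF Lin[OF kl]] unfolding dd_def by simp
qed

lemma Dl_card: assumes G: "G \<in> Dl" shows "card G \<le> dd"
proof -
  have G0: "G \<subseteq> L!0" and Gi: "indep Bs (G \<union> I)" using G unfolding Dl_eq by auto
  have fG: "finite G" using G0 finB[OF Lin[OF len_pos]] finite_subset by blast
  have "G \<inter> I = {}" using G0 I0 by blast
  then have "card (G \<union> I) = card G + card I" using fG finI card_Un_disjoint by blast
  moreover have "card (G \<union> I) \<le> rk" using indep_card[OF Gi] .
  ultimately show ?thesis unfolding dd_def by simp
qed

lemma fi_props: assumes G: "G \<in> Dl"
  shows "fi G \<in> K" "Rk (fi G) \<inter> L!0 \<subseteq> G" "G \<subseteq> L!(fi G) \<inter> L!0"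
proof -
  have G0: "G \<subseteq> L!0" and Gi: "indep Bs (G \<union> I)" using G unfolding Dl_eq by auto
  obtain X where X: "X \<in> Bs" "G \<union> I \<subseteq> X" using Gi unfolding indep_def by blast
  obtain j where j: "j < length L" "L!j = X" using idx[OF X(1)] by blast
  have jP: "j < length L \<and> G \<union> I \<subseteq> L!j" using j X by simp
  have c: "fi G < length L \<and> G \<union> I \<subseteq> L!(fi G)" unfolding fi_def
    by (rule LeastI[of "\<lambda>k. k < length L \<and> G \<union> I \<subseteq> L!k" j, OF jP])
  have cmin: "\<not>(\<exists>m<fi G. G \<union> I \<subseteq> L!m)"
  proof
    assume "\<exists>m<fi G. G \<union> I \<subseteq> L!m"
    then obtain m where m: "m < fi G" "G \<union> I \<subseteq> L!m" by blast
    have "\<not> (m < length L \<and> G \<union> I \<subseteq> L!m)" using m(1) unfolding fi_def by (rule not_less_Least)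
    then show False using m c by simp
  qed
  have R: "Rk (fi G) \<subseteq> G \<union> I" using new_iff[of "fi G" "G \<union> I"] c cmin by blast
  have "L!(fi G) - L!0 \<subseteq> Rk (fi G)" using outside_R c by blast
  then have "L!(fi G) - L!0 \<subseteq> I" using R G0 by blast
  moreover have "I \<subseteq> L!(fi G) - L!0" using c I0 by blast
  ultimately have "L!(fi G) - L!0 = I" by blast
  then show "fi G \<in> K" unfolding K_def using c by blast
  show "Rk (fi G) \<inter> L!0 \<subseteq> G" using R I0 by blast
  show "G \<subseteq> L!(fi G) \<inter> L!0" using c G0 by blast
qed

lemma fi_inv: assumes k: "k \<in> K" and R: "Rk k \<inter> L!0 \<subseteq> G" and G: "G \<subseteq> L!k \<inter> L!0"
  shows "G \<in> Dl" "fi G = k"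
proof -
  have kl: "k < length L" and kI: "L!k - L!0 = I" using k unfolding K_def by auto
  have sub1: "G \<union> I \<subseteq> L!k" using G kI by blast
  have "indep Bs (G \<union> I)" unfolding indep_def using sub1 Lin[OF kl] by blast
  then show "G \<in> Dl" unfolding Dl_eq using G by blast
  have "Rk k \<subseteq> G \<union> I" using K_R[OF k] R by blast
  then have nw: "\<not>(\<exists>m<k. G \<union> I \<subseteq> L!m)" using new_iff[OF kl sub1] by blast
  show "fi G = k" unfolding fi_def
  proof (rule Least_equality)
    show "k < length L \<and> G \<union> I \<subseteq> L!k" using kl sub1 by blast
  next
    fix y assume y: "y < length L \<and> G \<union> I \<subseteq> L!y"
    show "k \<le> y"
    proof (rule ccontr)
      assume "\<not> k \<le> y"
      then have "y < k" by simp
      then show False using nw y by blast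
    qed
  qed
qed

lemma fiber: assumes k: "k \<in> K"
  shows "{G \<in> Dl. fi G = k} = {G. Rk k \<inter> L!0 \<subseteq> G \<and> G \<subseteq> L!k \<inter> L!0}"
proof
  show "{G \<in> Dl. fi G = k} \<subseteq> {G. Rk k \<inter> L!0 \<subseteq> G \<and> G \<subseteq> L!k \<inter> L!0}"
  proof
    fix G assume "G \<in> {G \<in> Dl. fi G = k}"
    then have G: "G \<in> Dl" "fi G = k" by auto
    show "G \<in> {G. Rk k \<inter> L!0 \<subseteq> G \<and> G \<subseteq> L!k \<inter> L!0}"
      using fi_props[OF G(1)] G(2) by simp
  qed
  show "{G. Rk k \<inter> L!0 \<subseteq> G \<and> G \<subseteq> L!k \<inter> L!0} \<subseteq> {G \<in> Dl. fi G = k}"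
    using fi_inv[OF k] by blast
qed

lemma K_ne: "\<exists>c. c \<in> K"
proof -
  obtain c where "c < length L" "L!c - L!0 = I" using first_with[OF Iind I0] by blast
  then show ?thesis unfolding K_def by blast
qed

lemma Max_Dl: "Max (card ` Dl) = dd"
proof (rule Max_eqI)
  show "finite (card ` Dl)" using finDl by simp
  show "\<And>y. y \<in> card ` Dl \<Longrightarrow> y \<le> dd" using Dl_card by blast
  obtain c where c: "c \<in> K" using K_ne by blast
  have s1: "Rk c \<inter> L!0 \<subseteq> L!c \<inter> L!0" using Rk_sub by blast
  have "L!c \<inter> L!0 \<in> Dl" using fi_inv(1)[OF c s1 subset_refl] .
  moreover have "card (L!c \<inter> L!0) = dd" using K_L[OF c] by simp
  ultimately show "dd \<in> card ` Dl" by force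
qed

abbreviation "yy \<equiv> [:1,-1:] :: int poly"

lemma poly_eq:
  "(\<Sum>i\<le>dd. of_nat (card {X\<in>Dl. card X = i}) * monom 1 i * yy ^ (dd - i)) = (\<Sum>k\<in>K. monom 1 (rr k))"
proof -
  define h where "h = (\<lambda>X::'a set. monom (1::int) (card X) * yy ^ (dd - card X))"
  have "(\<Sum>i\<le>dd. of_nat (card {X\<in>Dl. card X = i}) * monom 1 i * yy ^ (dd - i))
      = (\<Sum>i\<le>dd. sum h {X\<in>Dl. card X = i})"
  proof (rule sum.cong)
    fix i assume "i \<in> {..dd}"
    have "sum h {X\<in>Dl. card X = i} = (\<Sum>X\<in>{X\<in>Dl. card X = i}. monom (1::int) i * yy ^ (dd - i))"
      unfolding h_def by (rule sum.cong) auto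
    also have "\<dots> = of_nat (card {X\<in>Dl. card X = i}) * (monom 1 i * yy ^ (dd - i))"
      by (rule sum_constant)
    finally show "of_nat (card {X\<in>Dl. card X = i}) * monom 1 i * yy ^ (dd - i) = sum h {X\<in>Dl. card X = i}"
      by (simp add: mult.assoc)
  qed simp
  also have "\<dots> = sum h Dl"
  proof (rule sum.group)
    show "finite Dl" by (rule finDl)
    show "finite {..dd}" by simp
    show "card ` Dl \<subseteq> {..dd}" using Dl_card by auto
  qed
  also have "\<dots> = (\<Sum>k\<in>K. sum h {G\<in>Dl. fi G = k})"
  proof (rule sum.group[symmetric])
    show "finite Dl" by (rule finDl)
    show "finite K" by (rule finK)
    show "fi ` Dl \<subseteq> K" using fi_props(1) by blast
  qed
  also have "\<dots> = (\<Sum>k\<in>K. monom 1 (rr k))"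
  proof (rule sum.cong)
    fix k assume k: "k \<in> K"
    have kl: "k < length L" using k unfolding K_def by simp
    have fJ: "finite (L!k \<inter> L!0)" using finB[OF Lin[OF kl]] by blast
    have RJ: "Rk k \<inter> L!0 \<subseteq> L!k \<inter> L!0" using Rk_sub by blast
    have "sum h {G\<in>Dl. fi G = k} = (\<Sum>G\<in>{G. Rk k \<inter> L!0 \<subseteq> G \<and> G \<subseteq> L!k \<inter> L!0}.
           monom (1::int) (card G) * yy ^ (card (L!k \<inter> L!0) - card G))"
      unfolding fiber[OF k] h_def K_L(2)[OF k] ..
    also have "\<dots> = monom 1 (card (Rk k \<inter> L!0))" by (rule interval_sum[OF fJ RJ])
    finally show "sum h {G\<in>Dl. fi G = k} = monom 1 (rr k)" unfolding rr_def .
  qed simp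
  finally show ?thesis .
qed

lemma hvec_eq: "hvec Dl j = int (card {k\<in>K. rr k = j})"
proof -
  have "hvec Dl j = coeff (\<Sum>k\<in>K. monom 1 (rr k)) j"
    unfolding hvec_def Let_def Max_Dl poly_eq ..
  also have "\<dots> = (\<Sum>k\<in>K. (if rr k = j then 1 else 0))"
    unfolding coeff_sum coeff_monom ..
  also have "\<dots> = (\<Sum>k\<in>{k\<in>K. rr k = j}. 1)"
    using sum.inter_filter[OF finK, of "\<lambda>_. 1::int" "\<lambda>k. rr k = j"] by simp
  also have "\<dots> = int (card {k\<in>K. rr k = j})" by simp
  finally show ?thesis .
qed

lemma count_eq:
  "{k. k < length L \<and> card (restr L k) = card I + j \<and>
       atoms_below L k = {a. a < length L \<and> (\<exists>i\<in>I. restr L a = {i})}} = {k\<in>K. rr k = j}"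
proof (intro set_eqI iffI)
  fix k assume "k \<in> {k. k < length L \<and> card (restr L k) = card I + j \<and>
       atoms_below L k = {a. a < length L \<and> (\<exists>i\<in>I. restr L a = {i})}}"
  then have k: "k < length L" "card (Rk k) = card I + j"
      "atoms_below L k = {a. a < length L \<and> (\<exists>i\<in>I. restr L a = {i})}" using restr_eq by auto
  have "L!k - L!0 = I" using atoms_below_iff[OF Iind I0 k(1)] k(3) by blast
  then have kK: "k \<in> K" unfolding K_def using k by blast
  then have "rr k = j" using K_card k(2) by simp
  then show "k \<in> {k\<in>K. rr k = j}" using kK by blast
next
  fix k assume "k \<in> {k\<in>K. rr k = j}"
  then have kK: "k \<in> K" and r: "rr k = j" by auto
  have kl: "k < length L" and kI: "L!k - L!0 = I" using kK unfolding K_def by auto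
  have "card (restr L k) = card I + j" using K_card[OF kK] r restr_eq[OF kl] by simp
  moreover have "atoms_below L k = {a. a < length L \<and> (\<exists>i\<in>I. restr L a = {i})}"
    using atoms_below_iff[OF Iind I0 kl] kI by blast
  ultimately show "k \<in> {k. k < length L \<and> card (restr L k) = card I + j \<and>
       atoms_below L k = {a. a < length L \<and> (\<exists>i\<in>I. restr L a = {i})}}" using kl by blast
qed

end

theorem lemma7p2:
  fixes E :: "'a set" and Bs :: "'a set set" and L :: "'a set list" and I :: "'a set"
  assumes "matroid E Bs"
    and "pinned_broken_line_shelling Bs L"
    and "indep Bs I"
    and "I \<inter> hd L = {}"
  shows "(\<forall>j. int (card {k. k < length L \<and> card (restr L k) = card I + j \<and>
              atoms_below L k = {a. a < length L \<and> (\<exists>i\<in>I. restr L a = {i})}})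
           = hvec (contract_restrict_indeps E Bs I (hd L)) j)
       \<and> (int_ranked L \<longrightarrow> (\<forall>\<rho>. int_rank_fun L \<rho> \<longrightarrow> (\<forall>j.
            int (card {k. k < length L \<and> \<rho> k = card I + j \<and>
              atoms_below L k = {a. a < length L \<and> (\<exists>i\<in>I. restr L a = {i})}})
           = hvec (contract_restrict_indeps E Bs I (hd L)) j)))"
proof -
  have Lne: "L \<noteq> []" using assms(2) unfolding pinned_broken_line_shelling_def by blast
  have hd: "hd L = L!0" using Lne hd_conv_nth by blast
  have I0: "I \<inter> L!0 = {}" using assms(4) hd by simp
  interpret pshellI E Bs L I
  proof unfold_locales
    show "matroid E Bs" by (rule assms(1))
    show "pinned_broken_line_shelling Bs L" by (rule assms(2))
    show "indep Bs I" by (rule assms(3))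
    show "I \<inter> L!0 = {}" by (rule I0)
  qed
  have part1: "int (card {k. k < length L \<and> card (restr L k) = card I + j \<and>
              atoms_below L k = {a. a < length L \<and> (\<exists>i\<in>I. restr L a = {i})}})
           = hvec (contract_restrict_indeps E Bs I (hd L)) j" for j
  proof -
    have "hvec (contract_restrict_indeps E Bs I (hd L)) j = hvec Dl j" unfolding hd Dl_def ..
    also have "\<dots> = int (card {k\<in>K. rr k = j})" by (rule hvec_eq)
    finally show ?thesis unfolding count_eq by simp
  qed
  have part2: "int (card {k. k < length L \<and> \<rho> k = card I + j \<and>
              atoms_below L k = {a. a < length L \<and> (\<exists>i\<in>I. restr L a = {i})}})
           = hvec (contract_restrict_indeps E Bs I (hd L)) j" if rf: "int_rank_fun L \<rho>" for \<rho> j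
  proof -
    have "{k. k < length L \<and> \<rho> k = card I + j \<and>
              atoms_below L k = {a. a < length L \<and> (\<exists>i\<in>I. restr L a = {i})}}
        = {k. k < length L \<and> card (restr L k) = card I + j \<and>
              atoms_below L k = {a. a < length L \<and> (\<exists>i\<in>I. restr L a = {i})}}"
    proof (intro Collect_cong)
      fix k
      show "(k < length L \<and> \<rho> k = card I + j \<and>
              atoms_below L k = {a. a < length L \<and> (\<exists>i\<in>I. restr L a = {i})}) =
            (k < length L \<and> card (restr L k) = card I + j \<and>
              atoms_below L k = {a. a < length L \<and> (\<exists>i\<in>I. restr L a = {i})})"
      proof (cases "k < length L")
        case True
        have "\<rho> k = card (restr L k)" using rank_eq[OF rf True] restr_eq[OF True] by simp
        then show ?thesis by simp
      qed simp
    qed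
    then show ?thesis using part1 by simp
  qed
  show ?thesis using part1 part2 by blast
qed

end
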